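(* Let $\mathcal{P}=\{(P_1,\Gamma_1),\ldots,(P_m,\Gamma_m)\}$ be a set of $m$ uncertain points in $\mathbb{R}^2$ under the multipoint model with $P=\bigcup_{i=1}^m P_i$ and $|P|=n$. For any $\beta\in[0,1]$, the $\beta$-hull of $\mathcal{P}$ has $O(n)$ vertices.
   Context: Multipoint model: $P_i=\{p_i^1,\ldots,p_i^{n_i}\}\subset\mathbb{R}^2$ are the possible sites of the $i$-th uncertain point and $\Gamma_i=\{\gamma_i^1,\ldots,\gamma_i^{n_i}\}\subset(0,1]$ the associated probabilities, with $\sum_j\gamma_i^j\le1$. A convex set $C\subseteq\mathbb{R}^2$ is $\beta$-dense with respect to $\mathcal{P}$ if $\sum_{j:\,p_i^j\in C}\gamma_i^j\ge\beta$ for every $i\le m$. The $\beta$-hull of $\mathcal{P}$ is the intersection of all convex $\beta$-dense sets with respect to $\mathcal{P}$. *)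

theory Defs
  imports "HOL-Analysis.Analysis"
begin

text \<open>Multipoint model: uncertain point i (for i < m) has ns i sites
  p i j (j < ns i) in the plane with probabilities \<gamma> i j.\<close>

definition beta_dense ::
  "nat \<Rightarrow> (nat \<Rightarrow> nat) \<Rightarrow> (nat \<Rightarrow> nat \<Rightarrow> real^2) \<Rightarrow> (nat \<Rightarrow> nat \<Rightarrow> real)
   \<Rightarrow> real \<Rightarrow> (real^2) set \<Rightarrow> bool" where
  "beta_dense m ns p \<gamma> \<beta> C \<longleftrightarrow>
     (\<forall>i<m. (\<Sum>j\<in>{j. j < ns i \<and> p i j \<in> C}. \<gamma> i j) \<ge> \<beta>)"

definition beta_hull ::
  "nat \<Rightarrow> (nat \<Rightarrow> nat) \<Rightarrow> (nat \<Rightarrow> nat \<Rightarrow> real^2) \<Rightarrow> (nat \<Rightarrow> nat \<Rightarrow> real)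
   \<Rightarrow> real \<Rightarrow> (real^2) set" where
  "beta_hull m ns p \<gamma> \<beta> = \<Inter>{C. convex C \<and> beta_dense m ns p \<gamma> \<beta> C}"

definition sites :: "nat \<Rightarrow> (nat \<Rightarrow> nat) \<Rightarrow> (nat \<Rightarrow> nat \<Rightarrow> real^2) \<Rightarrow> (real^2) set" where
  "sites m ns p = (\<Union>i<m. p i ` {..<ns i})"

end

theory Submission
  imports Defs
begin

definition cr :: "real^2 \<Rightarrow> real^2 \<Rightarrow> real" where
  "cr d z = d$1*z$2 - d$2*z$1"

lemma inner2: "(x::real^2) \<bullet> y = x$1*y$1 + x$2*y$2"
  by (simp add: inner_vec_def sum_2)

lemma vec2_eq: "((x::real^2) = y) \<longleftrightarrow> x$1 = y$1 \<and> x$2 = y$2"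
  by (simp add: vec_eq_iff forall_2)

lemma kappa:
  fixes u d :: "real^2"
  assumes "u \<bullet> d = 0" "u \<noteq> 0" "d \<noteq> 0"
  shows "\<exists>k. k \<noteq> 0 \<and> (\<forall>z. u \<bullet> z = k * cr d z)"
proof (cases "d$1 = 0")
  case True
  then have d2: "d$2 \<noteq> 0" using assms(3) by (auto simp: vec2_eq)
  have u2: "u$2 = 0" using assms(1) True d2 by (simp add: inner2)
  have u1: "u$1 \<noteq> 0" using assms(2) u2 by (auto simp: vec2_eq)
  show ?thesis
    by (rule exI[of _ "- u$1 / d$2"]) (use True d2 u1 u2 in \<open>auto simp: inner2 cr_def field_simps\<close>)
next
  case False
  have e: "u$1 = - u$2 * d$2 / d$1" using assms(1) False by (simp add: inner2 field_simps)
  have u2: "u$2 \<noteq> 0" using assms(2) e by (auto simp: vec2_eq)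
  show ?thesis
    by (rule exI[of _ "u$2 / d$1"]) (use False u2 e in \<open>auto simp: inner2 cr_def field_simps\<close>)
qed

lemma cr_zero_mult:
  fixes d e :: "real^2"
  assumes "d \<noteq> 0" "cr d e = 0"
  shows "\<exists>\<mu>. e = \<mu> *\<^sub>R d"
proof (cases "d$1 = 0")
  case True
  then have d2: "d$2 \<noteq> 0" using assms(1) by (auto simp: vec2_eq)
  show ?thesis
    by (rule exI[of _ "e$2 / d$2"]) (use True d2 assms(2) in \<open>auto simp: vec2_eq cr_def field_simps\<close>)
next
  case False
  show ?thesis
    by (rule exI[of _ "e$1 / d$1"]) (use False assms(2) in \<open>auto simp: vec2_eq cr_def field_simps\<close>)
qed

lemma le2:
  assumes "\<And>x y z. x \<in> X \<Longrightarrow> y \<in> X \<Longrightarrow> z \<in> X \<Longrightarrow> x \<noteq> y \<Longrightarrow> y \<noteq> z \<Longrightarrow> x \<noteq> z \<Longrightarrow> False"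
  shows "finite X \<and> card X \<le> 2"
proof -
  have "\<exists>x y. X \<subseteq> {x, y}"
  proof (cases "X = {}")
    case True then show ?thesis by auto
  next
    case False
    then obtain x where x: "x \<in> X" by auto
    show ?thesis
    proof (cases "X \<subseteq> {x}")
      case True then show ?thesis by auto
    next
      case False
      then obtain y where y: "y \<in> X" "y \<noteq> x" by auto
      have "X \<subseteq> {x, y}" using assms x y by blast
      then show ?thesis by blast
    qed
  qed
  then obtain x y where "X \<subseteq> {x, y}" by blast
  moreover have "card {x, y} \<le> 2" by (simp add: card_insert_if)
  ultimately show ?thesis by (meson card_mono finite.emptyI finite.insertI finite_subset order_trans)
qed

lemma tangent_count:
  fixes K :: "(real^2) set" and a :: "real^2" and \<sigma> :: real
  assumes "\<sigma> \<noteq> 0"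
  shows "finite {v. v extreme_point_of K \<and> v \<noteq> a \<and> (\<forall>x\<in>K. \<sigma> * cr (v - a) (x - a) \<le> 0)}
       \<and> card {v. v extreme_point_of K \<and> v \<noteq> a \<and> (\<forall>x\<in>K. \<sigma> * cr (v - a) (x - a) \<le> 0)} \<le> 2"
proof (rule le2)
  fix v w z
  assume v: "v \<in> {v. v extreme_point_of K \<and> v \<noteq> a \<and> (\<forall>x\<in>K. \<sigma> * cr (v - a) (x - a) \<le> 0)}"
     and w: "w \<in> {v. v extreme_point_of K \<and> v \<noteq> a \<and> (\<forall>x\<in>K. \<sigma> * cr (v - a) (x - a) \<le> 0)}"
     and z: "z \<in> {v. v extreme_point_of K \<and> v \<noteq> a \<and> (\<forall>x\<in>K. \<sigma> * cr (v - a) (x - a) \<le> 0)}"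
     and d: "v \<noteq> w" "w \<noteq> z" "v \<noteq> z"
  have inK: "v \<in> K" "w \<in> K" "z \<in> K" using v w z by (auto simp: extreme_point_of_def)
  have anti: "cr e f = - cr f e" for e f by (simp add: cr_def)
  have zero: "cr (p - a) (q - a) = 0" if "p \<in> K" "q \<in> K"
      "\<forall>x\<in>K. \<sigma> * cr (p - a) (x - a) \<le> 0" "\<forall>x\<in>K. \<sigma> * cr (q - a) (x - a) \<le> 0" for p q
  proof -
    have "\<sigma> * cr (p - a) (q - a) \<le> 0" "\<sigma> * cr (q - a) (p - a) \<le> 0" using that by auto
    then have "\<sigma> * cr (p - a) (q - a) = 0" using anti[of "q - a" "p - a"] by (simp add: algebra_simps)
    then show ?thesis using assms by simp
  qed
  have va: "v - a \<noteq> 0" using v by auto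
  obtain \<mu> where mu: "w - a = \<mu> *\<^sub>R (v - a)"
    using cr_zero_mult[OF va zero[of v w]] inK v w by auto
  obtain \<nu> where nu: "z - a = \<nu> *\<^sub>R (v - a)"
    using cr_zero_mult[OF va zero[of v z]] inK v z by auto
  have e1: "v = a + 1 *\<^sub>R (v - a)" by simp
  have e2: "w = a + \<mu> *\<^sub>R (v - a)" using mu by (simp add: algebra_simps)
  have e3: "z = a + \<nu> *\<^sub>R (v - a)" using nu by (simp add: algebra_simps)
  have "collinear {v, w, z}"
    unfolding collinear_alt using e1 e2 e3 by blast
  then have "between (w,z) v \<or> between (z,v) w \<or> between (v,w) z"
    by (simp add: collinear_between_cases)
  then show False
  proof (elim disjE)
    assume "between (w,z) v"
    then have "v \<in> open_segment w z" using d by (auto simp: between_mem_segment open_segment_def)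
    then show False using v inK by (auto simp: extreme_point_of_def)
  next
    assume "between (z,v) w"
    then have "w \<in> open_segment z v" using d by (auto simp: between_mem_segment open_segment_def)
    then show False using w inK by (auto simp: extreme_point_of_def)
  next
    assume "between (v,w) z"
    then have "z \<in> open_segment v w" using d by (auto simp: between_mem_segment open_segment_def)
    then show False using z inK by (auto simp: extreme_point_of_def)
  qed
qed


lemma hull_point:
  fixes u v :: "real^2" and T :: "(real^2) set"
  assumes fT: "finite T" and vT: "v \<in> convex hull T" and vnT: "v \<notin> T"
    and le: "\<forall>y\<in>convex hull T. u \<bullet> y \<le> u \<bullet> v"
  shows "\<exists>t\<in>T. u \<bullet> t = u \<bullet> v"
proof (rule ccontr)
  assume "\<not> ?thesis"
  then have lt: "\<forall>t\<in>T. u \<bullet> t < u \<bullet> v"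
  proof (intro ballI)
    fix t assume tT: "t \<in> T" and ne: "\<not> (\<exists>t\<in>T. u \<bullet> t = u \<bullet> v)"
    have "t \<in> convex hull T" using tT by (rule hull_inc)
    then have "u \<bullet> t \<le> u \<bullet> v" using le by blast
    then show "u \<bullet> t < u \<bullet> v" using ne tT by force
  qed
  obtain w where w: "\<forall>x\<in>T. 0 \<le> w x" "sum w T = 1" "(\<Sum>x\<in>T. w x *\<^sub>R x) = v"
    using vT unfolding convex_hull_finite[OF fT] by blast
  have "u \<bullet> v = u \<bullet> (\<Sum>x\<in>T. w x *\<^sub>R x)" using w(3) by simp
  also have "\<dots> = (\<Sum>x\<in>T. w x * (u \<bullet> x))" by (simp add: inner_sum_right)
  finally have uv: "u \<bullet> v = (\<Sum>x\<in>T. w x * (u \<bullet> x))" .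
  have "(\<Sum>x\<in>T. w x * (u \<bullet> v - u \<bullet> x)) = (\<Sum>x\<in>T. w x * (u \<bullet> v)) - (\<Sum>x\<in>T. w x * (u \<bullet> x))"
    by (simp add: right_diff_distrib sum_subtractf)
  also have "(\<Sum>x\<in>T. w x * (u \<bullet> v)) = sum w T * (u \<bullet> v)"
    by (rule sum_distrib_right[symmetric])
  finally have "(\<Sum>x\<in>T. w x * (u \<bullet> v - u \<bullet> x)) = 0"
    using w(2) uv by simp
  moreover have nn: "\<forall>x\<in>T. 0 \<le> w x * (u \<bullet> v - u \<bullet> x)"
  proof
    fix x assume xT: "x \<in> T"
    have "0 \<le> w x" using w(1) xT by blast
    moreover have "0 \<le> u \<bullet> v - u \<bullet> x" using lt xT by (simp add: less_imp_le)
    ultimately show "0 \<le> w x * (u \<bullet> v - u \<bullet> x)" by (rule mult_nonneg_nonneg)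
  qed
  ultimately have z: "\<forall>x\<in>T. w x * (u \<bullet> v - u \<bullet> x) = 0"
    using sum_nonneg_eq_0_iff[OF fT, of "\<lambda>x. w x * (u \<bullet> v - u \<bullet> x)"] by simp
  have "\<forall>x\<in>T. w x = 0"
  proof
    fix x assume xT: "x \<in> T"
    have "u \<bullet> x < u \<bullet> v" using lt xT by blast
    then have "u \<bullet> v - u \<bullet> x \<noteq> 0" by linarith
    moreover have "w x * (u \<bullet> v - u \<bullet> x) = 0" using z xT by blast
    ultimately show "w x = 0" by simp
  qed
  then have "sum w T = 0" by simp
  then show False using w(2) by simp
qed

lemma support:
  fixes S :: "(real^2) set"
  assumes fS: "finite S" and KD: "K = \<Inter>((\<lambda>T. convex hull T) ` D)" and DS: "D \<subseteq> Pow S"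
    and ve: "v extreme_point_of K" and vS: "v \<notin> S"
  shows "\<exists>a\<in>S. \<exists>\<sigma>\<in>{1, -1::real}. a \<noteq> v \<and> (\<forall>x\<in>K. \<sigma> * cr (v - a) (x - a) \<le> 0)"
proof -
  have fD: "finite D" using DS fS by (meson finite_Pow_iff finite_subset)
  have vK: "v \<in> K" using ve by (simp add: extreme_point_of_def)
  have "\<exists>T\<in>D. v \<notin> interior (convex hull T)"
  proof (rule ccontr)
    assume "\<not> ?thesis"
    then have vU: "v \<in> \<Inter>((\<lambda>T. interior (convex hull T)) ` D)" by auto
    have oU: "open (\<Inter>((\<lambda>T. interior (convex hull T)) ` D))"
      using fD by (intro open_INT) auto
    have "\<Inter>((\<lambda>T. interior (convex hull T)) ` D) \<subseteq> K"
      unfolding KD using interior_subset by blast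
    then have "v \<in> interior K" using vU oU interior_maximal by blast
    then show False using extreme_point_not_in_interior[OF ve] by simp
  qed
  then obtain T where TD: "T \<in> D" and vi: "v \<notin> interior (convex hull T)" by blast
  have TS: "T \<subseteq> S" using TD DS by auto
  have fT: "finite T" using TS fS finite_subset by blast
  have vT: "v \<in> convex hull T" using vK TD KD by auto
  have KT: "K \<subseteq> convex hull T" using TD KD by auto
  obtain u where u0: "u \<noteq> 0" and ule: "\<forall>y\<in>convex hull T. u \<bullet> y \<le> u \<bullet> v"
  proof (cases "interior (convex hull T) = {}")
    case True
    obtain a b where a0: "a \<noteq> 0" and ab: "convex hull T \<subseteq> {x. a \<bullet> x = b}"
      using empty_interior_subset_hyperplane[OF convex_convex_hull True] by blast
    have "\<forall>y\<in>convex hull T. a \<bullet> y \<le> a \<bullet> v"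
    proof
      fix y assume "y \<in> convex hull T"
      then have "a \<bullet> y = b" "a \<bullet> v = b" using ab vT by auto
      then show "a \<bullet> y \<le> a \<bullet> v" by simp
    qed
    then show ?thesis using that[of a] a0 by blast
  next
    case False
    then have ri: "rel_interior (convex hull T) = interior (convex hull T)"
      by (rule rel_interior_nonempty_interior)
    have vc: "v \<in> closure (convex hull T)" using vT closure_subset by blast
    have vr: "v \<notin> rel_interior (convex hull T)" using vi ri by simp
    obtain a where a0: "a \<noteq> 0" and ay: "\<And>y. y \<in> closure (convex hull T) \<Longrightarrow> a \<bullet> v \<le> a \<bullet> y"
      using supporting_hyperplane_relative_frontier[OF convex_convex_hull vc vr] by metis
    have "\<forall>y\<in>convex hull T. (-a) \<bullet> y \<le> (-a) \<bullet> v"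
    proof
      fix y assume "y \<in> convex hull T"
      then have "y \<in> closure (convex hull T)" using closure_subset by blast
      then have "a \<bullet> v \<le> a \<bullet> y" by (rule ay)
      then show "(-a) \<bullet> y \<le> (-a) \<bullet> v" by simp
    qed
    moreover have "-a \<noteq> 0" using a0 by simp
    ultimately show ?thesis using that by blast
  qed
  have vnT: "v \<notin> T" using vS TS by auto
  obtain t where tT: "t \<in> T" and ut: "u \<bullet> t = u \<bullet> v"
    using hull_point[OF fT vT vnT ule] by blast
  have tv: "t \<noteq> v" using tT vnT by auto
  have ud: "u \<bullet> (v - t) = 0" using ut by (simp add: inner_diff_right)
  obtain k where k0: "k \<noteq> 0" and kz: "\<forall>z. u \<bullet> z = k * cr (v - t) z"
    using kappa[OF ud u0] tv by auto
  have kx: "\<forall>x\<in>K. k * cr (v - t) (x - t) \<le> 0"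
  proof
    fix x assume "x \<in> K"
    then have "u \<bullet> x \<le> u \<bullet> v" using KT ule by auto
    then have "u \<bullet> (x - t) \<le> 0" using ut by (simp add: inner_diff_right)
    moreover have "u \<bullet> (x - t) = k * cr (v - t) (x - t)" using kz by blast
    ultimately show "k * cr (v - t) (x - t) \<le> 0" by simp
  qed
  show ?thesis
  proof (cases "k > 0")
    case True
    have "\<forall>x\<in>K. 1 * cr (v - t) (x - t) \<le> 0"
      using kx True by (simp add: mult_le_0_iff)
    then show ?thesis using tT TS tv by blast
  next
    case False
    then have "k < 0" using k0 by simp
    then have "\<forall>x\<in>K. -1 * cr (v - t) (x - t) \<le> 0"
      using kx by (simp add: mult_le_0_iff)
    then show ?thesis using tT TS tv by blast
  qed
qed

lemma sites_finite: "finite (sites m ns p)"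
  unfolding sites_def by auto

lemma hull_eq:
  "beta_hull m ns p \<gamma> \<beta> = \<Inter>((\<lambda>T. convex hull T) `
     {T. T \<subseteq> sites m ns p \<and> beta_dense m ns p \<gamma> \<beta> (convex hull T)})"
proof (rule antisym)
  show "beta_hull m ns p \<gamma> \<beta> \<subseteq> \<Inter>((\<lambda>T. convex hull T) `
     {T. T \<subseteq> sites m ns p \<and> beta_dense m ns p \<gamma> \<beta> (convex hull T)})"
    unfolding beta_hull_def by (auto intro: convex_convex_hull)
next
  show "\<Inter>((\<lambda>T. convex hull T) `
     {T. T \<subseteq> sites m ns p \<and> beta_dense m ns p \<gamma> \<beta> (convex hull T)}) \<subseteq> beta_hull m ns p \<gamma> \<beta>"
    unfolding beta_hull_def
  proof (rule Inter_greatest)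
    fix C assume "C \<in> {C. convex C \<and> beta_dense m ns p \<gamma> \<beta> C}"
    then have cC: "convex C" and dC: "beta_dense m ns p \<gamma> \<beta> C" by auto
    let ?T = "C \<inter> sites m ns p"
    have sub: "convex hull ?T \<subseteq> C" using cC by (simp add: hull_minimal)
    have "beta_dense m ns p \<gamma> \<beta> (convex hull ?T)"
      unfolding beta_dense_def
    proof (intro allI impI)
      fix i assume im: "i < m"
      have "{j. j < ns i \<and> p i j \<in> convex hull ?T} = {j. j < ns i \<and> p i j \<in> C}"
      proof (intro Collect_cong conj_cong refl iffI)
        fix j assume "j < ns i" "p i j \<in> convex hull ?T"
        then show "p i j \<in> C" using sub by blast
      next
        fix j assume j: "j < ns i" and "p i j \<in> C"
        moreover have "p i j \<in> sites m ns p" using im j unfolding sites_def by blast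
        ultimately have "p i j \<in> ?T" by blast
        then show "p i j \<in> convex hull ?T" by (rule hull_inc)
      qed
      then show "\<beta> \<le> (\<Sum>j\<in>{j. j < ns i \<and> p i j \<in> convex hull ?T}. \<gamma> i j)"
        using dC im unfolding beta_dense_def by simp
    qed
    then have "convex hull ?T \<in> (\<lambda>T. convex hull T) `
       {T. T \<subseteq> sites m ns p \<and> beta_dense m ns p \<gamma> \<beta> (convex hull T)}" by blast
    then show "\<Inter>((\<lambda>T. convex hull T) `
       {T. T \<subseteq> sites m ns p \<and> beta_dense m ns p \<gamma> \<beta> (convex hull T)}) \<subseteq> C"
      using sub by blast
  qed
qed

lemma count_bound:
  fixes S :: "(real^2) set"
  assumes fS: "finite S" and KD: "K = \<Inter>((\<lambda>T. convex hull T) ` D)" and DS: "D \<subseteq> Pow S"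
  shows "finite {x. x extreme_point_of K} \<and> card {x. x extreme_point_of K} \<le> 5 * card S"
proof -
  define X where "X a \<sigma> = {v. v extreme_point_of K \<and> v \<noteq> a \<and> (\<forall>x\<in>K. \<sigma> * cr (v - a) (x - a) \<le> 0)}"
    for a :: "real^2" and \<sigma> :: real
  have X1: "finite (X a 1) \<and> card (X a 1) \<le> 2" for a
    unfolding X_def by (rule tangent_count) simp
  have X2: "finite (X a (-1)) \<and> card (X a (-1)) \<le> 2" for a
    unfolding X_def by (rule tangent_count) simp
  have X12: "finite (X a 1 \<union> X a (-1)) \<and> card (X a 1 \<union> X a (-1)) \<le> 4" for a
    using X1[of a] X2[of a] card_Un_le[of "X a 1" "X a (-1)"] by auto
  define U where "U = (\<Union>a\<in>S. X a 1 \<union> X a (-1))"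
  have fU: "finite U" unfolding U_def using fS X12 by blast
  have "card U \<le> (\<Sum>a\<in>S. card (X a 1 \<union> X a (-1)))"
    unfolding U_def by (rule card_UN_le[OF fS])
  also have "\<dots> \<le> (\<Sum>a\<in>S. 4)" by (rule sum_mono) (use X12 in blast)
  also have "\<dots> = 4 * card S" by simp
  finally have cU: "card U \<le> 4 * card S" .
  have sub: "{x. x extreme_point_of K} \<subseteq> S \<union> U"
  proof
    fix v assume "v \<in> {x. x extreme_point_of K}"
    then have ve: "v extreme_point_of K" by simp
    show "v \<in> S \<union> U"
    proof (cases "v \<in> S")
      case True then show ?thesis by blast
    next
      case False
      obtain a \<sigma> where a: "a \<in> S" "\<sigma> \<in> {1, -1::real}" "a \<noteq> v"
          "\<forall>x\<in>K. \<sigma> * cr (v - a) (x - a) \<le> 0"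
        using support[OF fS KD DS ve False] by blast
      have "v \<in> X a \<sigma>" unfolding X_def using a ve by auto
      then have "v \<in> X a 1 \<union> X a (-1)" using a(2) by auto
      then show ?thesis unfolding U_def using a(1) by blast
    qed
  qed
  have fin: "finite (S \<union> U)" using fS fU by simp
  have "card {x. x extreme_point_of K} \<le> card (S \<union> U)" by (rule card_mono[OF fin sub])
  also have "\<dots> \<le> card S + card U" by (rule card_Un_le)
  finally have "card {x. x extreme_point_of K} \<le> 5 * card S" using cU by simp
  then show ?thesis using finite_subset[OF sub fin] by simp
qed

theorem mainTheorem9:
  "\<exists>c::real. \<forall>(m::nat) ns p \<gamma> (\<beta>::real).
     (\<forall>i<m. inj_on (p i) {..<ns i}) \<and>
     (\<forall>i<m. \<forall>j<ns i. 0 < \<gamma> i j \<and> \<gamma> i j \<le> 1) \<and>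
     (\<forall>i<m. (\<Sum>j<ns i. \<gamma> i j) \<le> 1) \<and>
     0 \<le> \<beta> \<and> \<beta> \<le> 1
     \<longrightarrow> finite {x. x extreme_point_of beta_hull m ns p \<gamma> \<beta>} \<and>
         real (card {x. x extreme_point_of beta_hull m ns p \<gamma> \<beta>})
           \<le> c * real (card (sites m ns p))"
  proof (intro exI[of _ 5] allI impI)
  fix m ns p \<gamma> \<beta>
  have r: "finite {x. x extreme_point_of beta_hull m ns p \<gamma> \<beta>} \<and>
     card {x. x extreme_point_of beta_hull m ns p \<gamma> \<beta>} \<le> 5 * card (sites m ns p)"
    by (rule count_bound[OF sites_finite hull_eq]) blast
  then show "finite {x. x extreme_point_of beta_hull m ns p \<gamma> \<beta>} \<and>
         real (card {x. x extreme_point_of beta_hull m ns p \<gamma> \<beta>})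
           \<le> 5 * real (card (sites m ns p))"
    by (metis (mono_tags, lifting) of_nat_le_iff of_nat_mult of_nat_numeral)
qed

end
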